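(* Let $P$ be the Petersen graph and $\mathcal{N}P$ its normal graph algebra over a field $\mathbb{F}$ of characteristic not $2$. For distinct $i,j\in\{1,\dots,6\}$ let $\mathbf{ij}\in U_P$ denote the vertex $\{i,j\}$ if $i,j\le5$, and $u_i$ if $j=6$ (similarly $u_j$ if $i=6$). For $1\le i\le 6$ let $\mathcal{F}_i=\{\langle\mathbf{ij}\rangle: j\in\{1,\dots,6\},\,j\neq i\}$, a set of five one-dimensional subspaces of $U_P$. If $g$ is an automorphism of $\mathcal{N}P$ such that for each $i$, $g$ maps every member of $\mathcal{F}_i$ to a member of $\mathcal{F}_i$, then $g$ is a scalar automorphism.
   Context: The Petersen graph $P$ has as vertices the 2-element subsets $\{i,j\}$ of $\{1,\dots,5\}$, two vertices adjacent iff disjoint. $\mathcal{N}P=U_P\oplus\mathfrak{Z}_P$ with $U_P$ having basis the vertices and $\mathfrak{Z}_P$ basis the edges, commutative bilinear product determined by: for distinct vertices $x,y$, $xy$ is the edge joining them if adjacent and $0$ otherwise; $x^2$ is the sum of the three edges at $x$; products involving $\mathfrak{Z}_P$ are $0$. For $1\le i\le5$, $u_i=\frac12\left(\sum_{i\notin A}A-\sum_{i\in A}A\right)$, sums over vertices $A$. An automorphism of $\mathcal{N}P$ is a product-preserving linear bijection mapping $U_P$ onto $U_P$ and $\mathfrak{Z}_P$ onto $\mathfrak{Z}_P$; it is scalar if for some $\alpha\neq0$ it is $u\mapsto\alpha u$ on $U_P$ and $\mathfrak{z}\mapsto\alpha^2\mathfrak{z}$ on $\mathfrak{Z}_P$.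 *)

theory Defs
  imports Main
begin

text \<open>Petersen graph: vertices are the 2-subsets of {1..5}; adjacency = disjointness.\<close>

definition PV :: "nat set set" where
  "PV = {A. A \<subseteq> {1..5} \<and> card A = 2}"

definition PE :: "nat set set set" where
  "PE = {{A, B} | A B. A \<in> PV \<and> B \<in> PV \<and> A \<inter> B = {}}"

text \<open>Elements of the normal graph algebra NP = U_P (+) Z_P over a field 'a:
  pairs (u, z) of coordinate functions, u on the vertex basis, z on the edge basis.\<close>

type_synonym 'a np = "(nat set \<Rightarrow> 'a) \<times> (nat set set \<Rightarrow> 'a)"

definition UP :: "'a::field np set" where
  "UP = {(u, z). (\<forall>A. A \<notin> PV \<longrightarrow> u A = 0) \<and> (\<forall>e. z e = 0)}"

definition ZP :: "'a::field np set" where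
  "ZP = {(u, z). (\<forall>A. u A = 0) \<and> (\<forall>e. e \<notin> PE \<longrightarrow> z e = 0)}"

definition NP :: "'a::field np set" where
  "NP = {(u, z). (\<forall>A. A \<notin> PV \<longrightarrow> u A = 0) \<and> (\<forall>e. e \<notin> PE \<longrightarrow> z e = 0)}"

definition np_add :: "'a::field np \<Rightarrow> 'a np \<Rightarrow> 'a np" where
  "np_add x y = (\<lambda>A. fst x A + fst y A, \<lambda>e. snd x e + snd y e)"

definition np_smult :: "'a::field \<Rightarrow> 'a np \<Rightarrow> 'a np" where
  "np_smult c x = (\<lambda>A. c * fst x A, \<lambda>e. c * snd x e)"

text \<open>Bilinear extension of: xy = edge {x,y} if x,y adjacent, 0 if distinct non-adjacent,
  x^2 = sum of the three edges at x, products with Z_P zero.\<close>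

definition np_mult :: "'a::field np \<Rightarrow> 'a np \<Rightarrow> 'a np" where
  "np_mult x y = (\<lambda>A. 0,
     \<lambda>e. if e \<in> PE then (\<Sum>A\<in>e. fst x A) * (\<Sum>A\<in>e. fst y A) else 0)"

definition np_automorphism :: "('a::field np \<Rightarrow> 'a np) \<Rightarrow> bool" where
  "np_automorphism g \<longleftrightarrow>
     bij_betw g NP NP \<and>
     (\<forall>x\<in>NP. \<forall>y\<in>NP. g (np_add x y) = np_add (g x) (g y)) \<and>
     (\<forall>c. \<forall>x\<in>NP. g (np_smult c x) = np_smult c (g x)) \<and>
     (\<forall>x\<in>NP. \<forall>y\<in>NP. g (np_mult x y) = np_mult (g x) (g y)) \<and>
     g ` UP = UP \<and> g ` ZP = ZP"

definition np_scalar :: "('a::field np \<Rightarrow> 'a np) \<Rightarrow> bool" where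
  "np_scalar g \<longleftrightarrow> (\<exists>\<alpha>::'a. \<alpha> \<noteq> 0 \<and>
     (\<forall>x\<in>UP. g x = np_smult \<alpha> x) \<and> (\<forall>x\<in>ZP. g x = np_smult (\<alpha>^2) x))"

definition vtx :: "nat set \<Rightarrow> 'a::field np" where
  "vtx A = (\<lambda>B. if B = A then 1 else 0, \<lambda>e. 0)"

definition uvec :: "nat \<Rightarrow> 'a::field np" where
  "uvec i = (\<lambda>A. if A \<in> PV then (if i \<notin> A then 1/2 else - (1/2)) else 0, \<lambda>e. 0)"

definition bold :: "nat \<Rightarrow> nat \<Rightarrow> 'a::field np" where
  "bold i j = (if j = 6 then uvec i else if i = 6 then uvec j else vtx {i, j})"

definition line :: "'a::field np \<Rightarrow> 'a np set" where
  "line w = {np_smult c w | c. True}"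

definition Fam :: "nat \<Rightarrow> 'a::field np set set" where
  "Fam i = {line (bold i j) | j. j \<in> {1..6} \<and> j \<noteq> i}"

end

theory Submission imports Defs begin

definition zero_np :: "'a::field np" where "zero_np = (\<lambda>_. 0, \<lambda>_. 0)"

lemma PV_finite: "finite PV"
proof -
  have "PV \<subseteq> Pow {1..5}" by (auto simp: PV_def)
  thus ?thesis by (rule finite_subset) simp
qed

lemma PV_pair: "A \<in> PV \<Longrightarrow> \<exists>i j. A = {i,j} \<and> i \<noteq> j \<and> i \<in> {1..5} \<and> j \<in> {1..5}"
  unfolding PV_def card_2_iff by auto blast

lemma pair_PV: "i \<noteq> j \<Longrightarrow> i \<in> {1..5} \<Longrightarrow> j \<in> {1..5} \<Longrightarrow> {i,j} \<in> PV"
  unfolding PV_def by auto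

lemma uvec_nz: "(2::'a::field) \<noteq> 0 \<Longrightarrow> B \<in> PV \<Longrightarrow> fst (uvec i :: 'a np) B \<noteq> 0"
  by (simp add: uvec_def)

lemma uu: assumes "(2::'a::field) \<noteq> 0" "i\<in>{1..5}" "j\<in>{1..5}" "i\<noteq>j"
  "np_smult c (uvec i) = np_smult (d::'a) (uvec j)" shows "c = 0"
proof -
  have e: "\<And>B. c * fst (uvec i :: 'a np) B = d * fst (uvec j :: 'a np) B"
    using assms(5) unfolding np_smult_def by (metis fst_conv)
  have p: "{1,2} \<in> PV" "{1,3} \<in> PV" "{1,4} \<in> PV" "{1,5} \<in> PV" "{2,3} \<in> PV"
     "{2,4} \<in> PV" "{2,5} \<in> PV" "{3,4} \<in> PV" "{3,5} \<in> PV" "{4,5} \<in> PV"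
    by (auto simp: PV_def)
  note E = e[of "{1,2}"] e[of "{1,3}"] e[of "{1,4}"] e[of "{1,5}"] e[of "{2,3}"]
     e[of "{2,4}"] e[of "{2,5}"] e[of "{3,4}"] e[of "{3,5}"] e[of "{4,5}"]
  have h: "c * (1/2) = d * (1/2) \<Longrightarrow> c * (-(1/2)) = d * (1/2) \<Longrightarrow> c = 0"
    "c * (1/2) = d * (1/2) \<Longrightarrow> c * (1/2) = d * (-(1/2)) \<Longrightarrow> c = 0"
    using assms(1) by (auto simp: field_simps) 
  show ?thesis using assms(2-4) E p h unfolding uvec_def
    by (auto simp: atLeastAtMost_iff le_Suc_eq numeral_eq_Suc)
qed


lemma p12: "{1,2} \<in> PV" "{3,4} \<in> PV" "{2,3} \<in> PV" by (auto simp: PV_def)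

lemma uv: assumes "(2::'a::field) \<noteq> 0" "np_smult c (uvec i) = np_smult (d::'a) (vtx A)"
  shows "c = 0"
proof -
  have e: "\<And>B. c * fst (uvec i :: 'a np) B = d * fst (vtx A :: 'a np) B"
    using assms(2) unfolding np_smult_def by (metis fst_conv)
  obtain B where B: "B \<in> PV" "B \<noteq> A"
  proof -
    have ne: "({1,2}::nat set) \<noteq> {3,4}" by (simp add: doubleton_eq_iff)
    show ?thesis using p12 ne that by metis
  qed
  have "c * fst (uvec i :: 'a np) B = 0" using e[of B] B by (simp add: vtx_def)
  thus ?thesis using uvec_nz[OF assms(1) B(1)] by simp
qed

lemma vv: assumes "np_smult c (vtx A) = np_smult (d::'a::field) (vtx B)" "c \<noteq> 0"
  shows "A = B"
proof -
  have "c * fst (vtx A :: 'a np) A = d * fst (vtx B :: 'a np) A"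
    using assms(1) unfolding np_smult_def by (metis fst_conv)
  thus ?thesis using assms(2) by (simp add: vtx_def split: if_splits)
qed

fun lsum :: "'a::field np list \<Rightarrow> 'a np" where
  "lsum [] = zero_np" | "lsum (x#xs) = np_add x (lsum xs)"

lemma lsum_fst: "fst (lsum xs) A = sum_list (map (\<lambda>x. fst x A) xs)"
  by (induction xs) (auto simp: zero_np_def np_add_def)

lemma lsum_snd: "snd (lsum xs) A = sum_list (map (\<lambda>x. snd x A) xs)"
  by (induction xs) (auto simp: zero_np_def np_add_def)

lemma zero_NP: "zero_np \<in> NP" by (simp add: zero_np_def NP_def)
lemma add_NP: "x \<in> NP \<Longrightarrow> y \<in> NP \<Longrightarrow> np_add x y \<in> NP"
  by (auto simp: NP_def np_add_def)
lemma smult_NP: "x \<in> NP \<Longrightarrow> np_smult c x \<in> NP"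
  by (auto simp: NP_def np_smult_def)
lemma lsum_NP: "set xs \<subseteq> NP \<Longrightarrow> lsum xs \<in> NP"
  by (induction xs) (auto simp: zero_NP add_NP)
lemma UP_NP: "UP \<subseteq> NP" by (auto simp: UP_def NP_def)
lemma ZP_NP: "ZP \<subseteq> NP" by (auto simp: ZP_def NP_def)
lemma vtx_NP: "A \<in> PV \<Longrightarrow> vtx A \<in> NP" by (auto simp: vtx_def NP_def)
lemma uvec_NP: "uvec i \<in> NP" by (auto simp: uvec_def NP_def)
lemma smult0: "np_smult 0 x = zero_np" by (simp add: np_smult_def zero_np_def)
lemma smult1: "np_smult 1 x = x" by (simp add: np_smult_def)

definition edge :: "nat set set \<Rightarrow> 'a::field np" where
  "edge e = (\<lambda>_. 0, \<lambda>e'. if e' = e then 1 else 0)"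

lemma PE_finite: "finite PE"
proof -
  have "PE \<subseteq> Pow PV" by (auto simp: PE_def)
  thus ?thesis using PV_finite by (meson finite_Pow_iff finite_subset)
qed

lemma PE_card: "e \<in> PE \<Longrightarrow> finite e"
  by (auto simp: PE_def)

lemma edge_mult: assumes "e \<in> PE" shows "\<exists>A B. A \<in> PV \<and> B \<in> PV \<and> e = {A,B} \<and>
   (edge e :: 'a::field np) = np_mult (vtx A) (vtx B)"
proof -
  obtain A B where AB: "A \<in> PV" "B \<in> PV" "A \<inter> B = {}" "e = {A,B}"
    using assms by (auto simp: PE_def)
  have AneB: "A \<noteq> B" using AB(1,3) by (auto simp: PV_def)
  have "(edge e :: 'a np) = np_mult (vtx A) (vtx B)"
  proof -
    have "\<And>e'. e' \<in> PE \<Longrightarrow> (\<Sum>C\<in>e'. fst (vtx A :: 'a np) C) = (if A \<in> e' then 1 else 0)"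
      "\<And>e'. e' \<in> PE \<Longrightarrow> (\<Sum>C\<in>e'. fst (vtx B :: 'a np) C) = (if B \<in> e' then 1 else 0)"
      by (simp_all add: vtx_def PE_card)
    moreover have "\<And>e'. e' \<in> PE \<Longrightarrow> (A \<in> e' \<and> B \<in> e') = (e' = e)"
    proof -
      fix e' assume "e' \<in> PE"
      then obtain A' B' where "e' = {A',B'}" "A' \<inter> B' = {}" "A' \<in> PV"
        by (auto simp: PE_def)
      thus "(A \<in> e' \<and> B \<in> e') = (e' = e)" using AB AneB by auto
    qed
    ultimately show ?thesis using assms unfolding edge_def np_mult_def by (auto simp: fun_eq_iff)
  qed
  thus ?thesis using AB by blast
qed

lemma mult_smult: "np_mult (np_smult c x) (np_smult c y) = np_smult (c^2) (np_mult x y)"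
  by (auto simp: np_mult_def np_smult_def sum_distrib_left[symmetric] power2_eq_square)

lemma UP_decomp: assumes "x \<in> UP" "distinct L" "set L = PV"
  shows "x = lsum (map (\<lambda>B. np_smult (fst x B) (vtx B)) L)"
proof (rule prod_eqI)
  show "fst x = fst (lsum (map (\<lambda>B. np_smult (fst x B) (vtx B)) L))"
  proof
    fix A
    have "fst (lsum (map (\<lambda>B. np_smult (fst x B) (vtx B)) L)) A
       = (\<Sum>B\<in>PV. if A = B then fst x B else 0)"
      using assms(2,3) by (auto simp add: lsum_fst o_def np_smult_def vtx_def sum_list_distinct_conv_sum_set intro!: sum.cong)
    also have "\<dots> = fst x A" using assms(1) PV_finite by (auto simp: UP_def sum.delta sum.delta')
    finally show "fst x A = fst (lsum (map (\<lambda>B. np_smult (fst x B) (vtx B)) L)) A" by simp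
  qed
  show "snd x = snd (lsum (map (\<lambda>B. np_smult (fst x B) (vtx B)) L))"
    using assms(1) by (auto simp: UP_def lsum_snd o_def np_smult_def vtx_def)
qed

lemma ZP_decomp: assumes "x \<in> ZP" "distinct L" "set L = PE"
  shows "x = lsum (map (\<lambda>e. np_smult (snd x e) (edge e)) L)"
proof (rule prod_eqI)
  show "snd x = snd (lsum (map (\<lambda>e. np_smult (snd x e) (edge e)) L))"
  proof
    fix A
    have "snd (lsum (map (\<lambda>e. np_smult (snd x e) (edge e)) L)) A
       = (\<Sum>B\<in>PE. if A = B then snd x B else 0)"
      using assms(2,3) by (auto simp add: lsum_snd o_def np_smult_def edge_def sum_list_distinct_conv_sum_set intro!: sum.cong)
    also have "\<dots> = snd x A" using assms(1) PE_finite by (auto simp: ZP_def sum.delta sum.delta')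
    finally show "snd x A = snd (lsum (map (\<lambda>e. np_smult (snd x e) (edge e)) L)) A" by simp
  qed
  show "fst x = fst (lsum (map (\<lambda>e. np_smult (snd x e) (edge e)) L))"
    using assms(1) by (auto simp: ZP_def lsum_fst o_def np_smult_def edge_def)
qed


lemma edge_NP: "e \<in> PE \<Longrightarrow> edge e \<in> NP" by (auto simp: edge_def NP_def)

lemma smult_comm: "np_smult a (np_smult c y) = np_smult c (np_smult a y)"
  by (simp add: np_smult_def mult.left_commute)

lemma lsum_smult: "lsum (map (np_smult c) xs) = np_smult c (lsum xs)"
  by (induction xs) (auto simp: np_smult_def zero_np_def np_add_def distrib_left)

lemma vtx_nz: "vtx A \<noteq> zero_np"
  by (auto simp: vtx_def zero_np_def fun_eq_iff)

theorem proposition10p3: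
  fixes g :: "'a::field np \<Rightarrow> 'a np"
  assumes char: "(2::'a) \<noteq> 0"
    and aut: "np_automorphism g"
    and fam: "\<forall>i\<in>{1..6}. \<forall>L\<in>Fam i. g ` L \<in> Fam i"
  shows "np_scalar g"
proof -
  have bij: "bij_betw g NP NP"
    and addg: "\<And>x y. x \<in> NP \<Longrightarrow> y \<in> NP \<Longrightarrow> g (np_add x y) = np_add (g x) (g y)"
    and smultg: "\<And>c x. x \<in> NP \<Longrightarrow> g (np_smult c x) = np_smult c (g x)"
    and multg: "\<And>x y. x \<in> NP \<Longrightarrow> y \<in> NP \<Longrightarrow> g (np_mult x y) = np_mult (g x) (g y)"
    and gUP: "g ` UP = UP"
    using aut unfolding np_automorphism_def by auto
  have g0: "g zero_np = zero_np"
    using smultg[OF zero_NP, of 0] by (simp add: smult0)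
  have inj: "inj_on g NP" using bij bij_betw_def by blast
  have gnz: "\<And>x. x \<in> NP \<Longrightarrow> x \<noteq> zero_np \<Longrightarrow> g x \<noteq> zero_np"
    using inj g0 zero_NP by (metis inj_on_def)
  have glsum: "\<And>xs. set xs \<subseteq> NP \<Longrightarrow> g (lsum xs) = lsum (map g xs)"
  proof -
    fix xs :: "'a np list"
    show "set xs \<subseteq> NP \<Longrightarrow> g (lsum xs) = lsum (map g xs)"
      by (induction xs) (auto simp: g0 addg lsum_NP)
  qed
  have K: "\<And>i j. i \<in> {1..6} \<Longrightarrow> j \<in> {1..6} \<Longrightarrow> j \<noteq> i \<Longrightarrow>
      \<exists>k c. k \<in> {1..6} \<and> k \<noteq> i \<and> g (bold i j) = np_smult c (bold i k)"
  proof -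
    fix i j :: nat assume ij: "i \<in> {1..6}" "j \<in> {1..6}" "j \<noteq> i"
    have "line (bold i j) \<in> (Fam i :: 'a np set set)" using ij unfolding Fam_def by blast
    hence "g ` line (bold i j) \<in> Fam i" using fam ij(1) by blast
    then obtain k where k: "k \<in> {1..6}" "k \<noteq> i" "g ` line (bold i j) = line (bold i k)"
      unfolding Fam_def by blast
    have "bold i j \<in> line (bold i j)" unfolding line_def by (metis (mono_tags) smult1 mem_Collect_eq)
    hence "g (bold i j) \<in> line (bold i k)" using k(3) by blast
    thus "\<exists>k c. k \<in> {1..6} \<and> k \<noteq> i \<and> g (bold i j) = np_smult c (bold i k)"
      using k unfolding line_def by blast
  qed
  have V: "\<And>A. A \<in> PV \<Longrightarrow> \<exists>c. g (vtx A) = np_smult c (vtx A)"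
  proof -
    fix A assume A: "A \<in> PV"
    obtain i j where ij: "A = {i,j}" "i \<noteq> j" "i \<in> {1..5}" "j \<in> {1..5}"
      using PV_pair[OF A] by blast
    have i6: "i \<in> {1..6}" "j \<in> {1..6}" using ij by auto
    have b1: "bold i j = vtx A" "bold j i = vtx A" using ij by (auto simp: bold_def insert_commute)
    obtain k c where kc: "k \<in> {1..6}" "k \<noteq> i" "g (vtx A) = np_smult c (bold i k)"
      using K[of i j, unfolded b1(1)] i6 ij(2) by blast
    obtain l d where ld: "l \<in> {1..6}" "l \<noteq> j" "g (vtx A) = np_smult d (bold j l)"
      using K[of j i, unfolded b1(2)] i6 ij(2) by metis
    have gA: "g (vtx A) \<noteq> zero_np" using gnz vtx_NP[OF A] vtx_nz by blast
    hence c0: "c \<noteq> 0" and d0: "d \<noteq> 0" using kc ld by (auto simp: smult0)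
    show "\<exists>c. g (vtx A) = np_smult c (vtx A)"
    proof (cases "k = 6")
      case True
      hence bk: "bold i k = uvec i" by (simp add: bold_def)
      show ?thesis
      proof (cases "l = 6")
        case True
        hence "bold j l = uvec j" by (simp add: bold_def)
        hence "np_smult c (uvec i) = np_smult d (uvec j)" using kc(3) ld(3) bk by metis
        hence "c = 0" using uu[OF char] ij by auto
        thus ?thesis using c0 by simp
      next
        case False
        hence "bold j l = vtx {j,l}" using ij by (simp add: bold_def)
        hence "np_smult c (uvec i) = np_smult d (vtx {j,l})" using kc(3) ld(3) bk by metis
        hence "c = 0" using uv[OF char] by blast
        thus ?thesis using c0 by simp
      qed
    next
      case False
      hence bk: "bold i k = vtx {i,k}" using ij by (simp add: bold_def)
      show ?thesis
      proof (cases "l = 6")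
        case True
        hence "bold j l = uvec j" by (simp add: bold_def)
        hence "np_smult d (uvec j) = np_smult c (vtx {i,k})" using kc(3) ld(3) bk by metis
        hence "d = 0" using uv[OF char] by blast
        thus ?thesis using d0 by simp
      next
        case False
        hence "bold j l = vtx {j,l}" using ij by (simp add: bold_def)
        hence "np_smult c (vtx {i,k}) = np_smult d (vtx {j,l})" using kc(3) ld(3) bk by metis
        hence "{i,k} = {j,l}" using vv c0 by blast
        hence "k = j" using ij(2) kc(2) by (auto simp: doubleton_eq_iff)
        hence "g (vtx A) = np_smult c (vtx A)" using kc(3) bk ij(1) by metis
        thus ?thesis by blast
      qed
    qed
  qed
  then obtain cf where cf: "\<And>A. A \<in> PV \<Longrightarrow> g (vtx A) = np_smult (cf A) (vtx A)"
    by metis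
  have cfnz: "\<And>A. A \<in> PV \<Longrightarrow> cf A \<noteq> 0"
    using cf gnz vtx_NP vtx_nz smult0 by metis
  obtain LV where LV: "distinct LV" "set LV = PV" using finite_distinct_list[OF PV_finite] by blast
  have gUPfst: "\<And>(x::'a np) A. x \<in> UP \<Longrightarrow> fst (g x) A = (if A \<in> PV then fst x A * cf A else 0)"
  proof -
    fix x :: "'a np" and A assume x: "x \<in> UP"
    have "g x = g (lsum (map (\<lambda>B. np_smult (fst x B) (vtx B)) LV))"
      using UP_decomp[OF x LV] by simp
    also have "\<dots> = lsum (map g (map (\<lambda>B. np_smult (fst x B) (vtx B)) LV))"
      by (rule glsum) (use LV in \<open>auto simp: smult_NP vtx_NP\<close>)
    also have "\<dots> = lsum (map (\<lambda>B. np_smult (fst x B) (np_smult (cf B) (vtx B))) LV)"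
      using LV by (auto simp: vtx_NP smultg cf intro!: arg_cong[where f=lsum] map_cong)
    finally have "fst (g x) A = (\<Sum>B\<in>PV. if A = B then fst x B * cf B else 0)"
      using LV by (auto simp add: lsum_fst o_def np_smult_def vtx_def sum_list_distinct_conv_sum_set intro!: sum.cong)
    thus "fst (g x) A = (if A \<in> PV then fst x A * cf A else 0)"
      using PV_finite by (simp add: sum.delta sum.delta')
  qed
  obtain k d where kd: "k \<in> {1..6}" "k \<noteq> 1" "g (uvec 1) = np_smult d (bold 1 k)"
    using K[of 1 6] by (auto simp: bold_def)
  have cfd: "\<And>A. A \<in> PV \<Longrightarrow> cf A = d"
  proof (cases "k = 6")
    case True
    fix A assume A: "A \<in> PV"
    have "fst (g (uvec 1)) A = d * fst (uvec 1 :: 'a np) A"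
      using kd True by (simp add: bold_def np_smult_def)
    moreover have "fst (g (uvec 1)) A = fst (uvec 1 :: 'a np) A * cf A"
      using gUPfst[of "uvec 1" A] A by (auto simp: UP_def uvec_def)
    ultimately show "cf A = d" using uvec_nz[OF char A, of 1] by (simp add: mult.commute)
  next
    case False
    hence "bold 1 k = vtx {1,k}" by (simp add: bold_def)
    hence gu: "g (uvec 1) = np_smult d (vtx {1,k})" using kd(3) by metis
    have "({2,3}::nat set) \<noteq> {1,k}" by (auto simp: doubleton_eq_iff)
    hence "fst (g (uvec 1)) {2,3} = 0"
      unfolding gu by (simp add: np_smult_def vtx_def)
    moreover have "fst (g (uvec 1)) {2,3} = fst (uvec 1 :: 'a np) {2,3} * cf {2,3}"
      using gUPfst[of "uvec 1" "{2,3}"] p12 by (auto simp: UP_def uvec_def)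
    ultimately have "cf {2,3} = 0" using uvec_nz[OF char p12(3), of 1] by simp
    thus "\<And>A. A \<in> PV \<Longrightarrow> cf A = d" using cfnz p12 by blast
  qed
  have d0: "d \<noteq> 0" using cfd cfnz p12 by metis
  have UPpart: "\<And>x. x \<in> UP \<Longrightarrow> g x = np_smult d x"
  proof -
    fix x :: "'a np" assume x: "x \<in> UP"
    have "g x \<in> UP" using gUP x by blast
    thus "g x = np_smult d x" using x gUPfst[OF x] cfd
      by (auto simp: UP_def np_smult_def fun_eq_iff intro!: prod_eqI)
  qed
  have gedge: "\<And>e. e \<in> PE \<Longrightarrow> g (edge e) = np_smult (d^2) (edge e)"
  proof -
    fix e assume e: "e \<in> PE"
    obtain A B where AB: "A \<in> PV" "B \<in> PV" "(edge e :: 'a np) = np_mult (vtx A) (vtx B)"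
      using edge_mult[OF e] by blast
    show "g (edge e) = np_smult (d^2) (edge e)"
    proof -
      have "g (edge e) = np_mult (g (vtx A)) (g (vtx B))" unfolding AB(3) using AB(1,2) by (simp add: multg vtx_NP)
      also have "\<dots> = np_mult (np_smult d (vtx A)) (np_smult d (vtx B))" using AB cf cfd by simp
      also have "\<dots> = np_smult (d^2) (edge e)" using AB(3) mult_smult by metis
      finally show ?thesis .
    qed
  qed
  obtain LE where LE: "distinct LE" "set LE = PE" using finite_distinct_list[OF PE_finite] by blast
  have ZPpart: "\<And>x. x \<in> ZP \<Longrightarrow> g x = np_smult (d^2) x"
  proof -
    fix x :: "'a np" assume x: "x \<in> ZP"
    have "g x = g (lsum (map (\<lambda>e. np_smult (snd x e) (edge e)) LE))"
      using ZP_decomp[OF x LE] by simp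
    also have "\<dots> = lsum (map g (map (\<lambda>e. np_smult (snd x e) (edge e)) LE))"
      by (rule glsum) (use LE in \<open>auto simp: smult_NP edge_NP\<close>)
    also have "\<dots> = lsum (map (\<lambda>e. np_smult (snd x e) (np_smult (d^2) (edge e))) LE)"
      using LE by (auto simp: edge_NP smultg gedge intro!: arg_cong[where f=lsum] map_cong)
    also have "\<dots> = lsum (map (np_smult (d^2)) (map (\<lambda>e. np_smult (snd x e) (edge e)) LE))"
      by (simp add: o_def smult_comm)
    also have "\<dots> = np_smult (d^2) x"
      using ZP_decomp[OF x LE] by (metis lsum_smult)
    finally show "g x = np_smult (d^2) x" .
  qed
  show ?thesis unfolding np_scalar_def using d0 UPpart ZPpart by blast
qed

end
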